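(* Let $G=(V,E)$ be an unweighted graph, i.e. $w(u,v)=1$ if $(u,v)\in E$ and $w(u,v)=0$ otherwise. Then $G$ is a ground-truth input if and only if each connected component of $G$ is a clique.
   Context: $G$ is a ground-truth input if there exist an ultrametric $d$ on $V$ (a metric with $d(x,y)\le\max\{d(x,z),d(y,z)\}$ for all $x,y,z\in V$) and a non-increasing function $f:\mathbb{R}_+\to\mathbb{R}_+$ such that $w(x,y)=f(d(x,y))$ for all distinct $x,y\in V$. *)

theory Defs
  imports Main "HOL-Library.Extended_Real" Complex_Main
begin

definition ultrametric_on :: "'a set \<Rightarrow> ('a \<Rightarrow> 'a \<Rightarrow> real) \<Rightarrow> bool" where
  "ultrametric_on V d \<longleftrightarrow>
     (\<forall>x\<in>V. \<forall>y\<in>V. d x y \<ge> 0) \<and>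
     (\<forall>x\<in>V. \<forall>y\<in>V. d x y = 0 \<longleftrightarrow> x = y) \<and>
     (\<forall>x\<in>V. \<forall>y\<in>V. d x y = d y x) \<and>
     (\<forall>x\<in>V. \<forall>y\<in>V. \<forall>z\<in>V. d x y \<le> d x z + d z y) \<and>
     (\<forall>x\<in>V. \<forall>y\<in>V. \<forall>z\<in>V. d x y \<le> max (d x z) (d y z))"

definition ground_truth_input :: "'a set \<Rightarrow> ('a \<Rightarrow> 'a \<Rightarrow> real) \<Rightarrow> bool" where
  "ground_truth_input V w \<longleftrightarrow>
     (\<exists>d f. ultrametric_on V d \<and>
        (\<forall>t\<ge>0. f t \<ge> (0::real)) \<and>
        (\<forall>s t. 0 \<le> s \<and> s \<le> t \<longrightarrow> f t \<le> f s) \<and>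
        (\<forall>x\<in>V. \<forall>y\<in>V. x \<noteq> y \<longrightarrow> w x y = f (d x y)))"

definition simple_graph :: "'a set \<Rightarrow> ('a \<times> 'a) set \<Rightarrow> bool" where
  "simple_graph V E \<longleftrightarrow> finite V \<and> E \<subseteq> V \<times> V \<and> sym E \<and> irrefl E"

definition unweighted :: "('a \<times> 'a) set \<Rightarrow> 'a \<Rightarrow> 'a \<Rightarrow> real" where
  "unweighted E u v = (if (u, v) \<in> E then 1 else 0)"

definition connected_component_of :: "('a \<times> 'a) set \<Rightarrow> 'a \<Rightarrow> 'a set" where
  "connected_component_of E v = {u. (v, u) \<in> E\<^sup>*}"

definition is_clique :: "('a \<times> 'a) set \<Rightarrow> 'a set \<Rightarrow> bool" where
  "is_clique E C \<longleftrightarrow> (\<forall>x\<in>C. \<forall>y\<in>C. x \<noteq> y \<longrightarrow> (x, y) \<in> E)"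

end

theory Submission
  imports Defs
begin

lemma trans_step:
  assumes "simple_graph V E" "ground_truth_input V (unweighted E)"
    and "(a,b) \<in> E" "(b,c) \<in> E" "a \<noteq> c"
  shows "(a,c) \<in> E"
proof -
  from assms(2) obtain d f where u: "ultrametric_on V d" and fpos: "\<forall>t\<ge>0. f t \<ge> (0::real)"
    and fmon: "\<forall>s t. 0 \<le> s \<and> s \<le> t \<longrightarrow> f t \<le> f s"
    and w: "\<forall>x\<in>V. \<forall>y\<in>V. x \<noteq> y \<longrightarrow> unweighted E x y = f (d x y)"
    unfolding ground_truth_input_def by blast
  have E: "E \<subseteq> V \<times> V" "irrefl E" using assms(1) unfolding simple_graph_def by auto
  have V: "a \<in> V" "b \<in> V" "c \<in> V" using assms(3,4) E by auto
  have ab: "a \<noteq> b" "b \<noteq> c" using assms(3,4) E(2) unfolding irrefl_def by auto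
  have f1: "f (d a b) = 1" "f (d b c) = 1"
    using w V ab assms(3,4) unfolding unweighted_def by (metis)+
  have ult: "d a c \<le> max (d a b) (d c b)" and sy: "d c b = d b c" and nn: "d a c \<ge> 0"
    using u V unfolding ultrametric_on_def by auto
  have "f (max (d a b) (d b c)) = 1" using f1 by (simp add: max_def)
  moreover have "f (max (d a b) (d b c)) \<le> f (d a c)" using fmon ult sy nn by auto
  ultimately have "f (d a c) \<ge> 1" by simp
  hence "unweighted E a c \<ge> 1" using w V assms(5) by metis
  thus ?thesis unfolding unweighted_def by (auto split: if_splits)
qed

theorem proposition1:
  assumes "simple_graph V E"
  shows "ground_truth_input V (unweighted E) \<longleftrightarrow>
         (\<forall>v\<in>V. is_clique E (connected_component_of E v))"
proof
  have E: "E \<subseteq> V \<times> V" "irrefl E" "sym E" using assms unfolding simple_graph_def by auto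
  assume g: "ground_truth_input V (unweighted E)"
  have tr: "\<And>a b c. (a,b) \<in> E \<Longrightarrow> (b,c) \<in> E \<Longrightarrow> a \<noteq> c \<Longrightarrow> (a,c) \<in> E"
    using trans_step[OF assms g] by blast
  have comp: "\<And>v u. (v,u) \<in> E\<^sup>* \<Longrightarrow> u = v \<or> (v,u) \<in> E"
  proof -
    fix v u assume "(v,u) \<in> E\<^sup>*"
    thus "u = v \<or> (v,u) \<in> E"
      by (induction rule: rtrancl_induct) (use tr in blast)+
  qed
  show "\<forall>v\<in>V. is_clique E (connected_component_of E v)"
    unfolding is_clique_def connected_component_of_def
  proof (intro ballI impI)
    fix v x y assume "x \<in> {u. (v, u) \<in> E\<^sup>*}" "y \<in> {u. (v, u) \<in> E\<^sup>*}" "x \<noteq> y"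
    then have "x = v \<or> (v,x) \<in> E" "y = v \<or> (v,y) \<in> E" "x \<noteq> y" using comp by auto
    thus "(x,y) \<in> E" using tr E(3) unfolding sym_def by metis
  qed
next
  have E: "E \<subseteq> V \<times> V" "irrefl E" "sym E" using assms unfolding simple_graph_def by auto
  assume cl: "\<forall>v\<in>V. is_clique E (connected_component_of E v)"
  have tr: "(z,x) \<in> E \<Longrightarrow> (z,y) \<in> E \<Longrightarrow> x \<noteq> y \<Longrightarrow> (x,y) \<in> E" for x y z
  proof -
    assume a: "(z,x) \<in> E" "(z,y) \<in> E" "x \<noteq> y"
    have "z \<in> V" using a E by auto
    moreover have "x \<in> connected_component_of E z" "y \<in> connected_component_of E z"
      using a unfolding connected_component_of_def by auto
    ultimately show ?thesis using cl a unfolding is_clique_def by blast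
  qed
  define d where "d = (\<lambda>x y. if x = y then 0 else if (x,y) \<in> E then 1 else (2::real))"
  define f where "f = (\<lambda>t::real. if t \<le> 1 then 1 else (0::real))"
  have symE: "(x,y) \<in> E \<longleftrightarrow> (y,x) \<in> E" for x y using E(3) unfolding sym_def by blast
  have "ultrametric_on V d"
    unfolding ultrametric_on_def
  proof (intro conjI ballI)
    fix x y z assume "x \<in> V" "y \<in> V" "z \<in> V"
    show "d x y \<le> max (d x z) (d y z)"
      unfolding d_def using tr[of z x y] symE by auto
  qed (auto simp: d_def symE)
  moreover have "\<forall>x\<in>V. \<forall>y\<in>V. x \<noteq> y \<longrightarrow> unweighted E x y = f (d x y)"
    by (auto simp: unweighted_def f_def d_def)
  ultimately show "ground_truth_input V (unweighted E)"
    unfolding ground_truth_input_def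
    by (rule_tac x=d in exI, rule_tac x=f in exI) (auto simp: f_def)
qed

end
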